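(* Let $\tau\in\mathbb{Z}$ and let $m_1,m_2\geq 1$ be integers. Define $$n_{(m_1,m_2)}(\tau)=\frac{1}{m_1+m_2}\sum_{d\mid m_1,\ d\mid m_2}\mu(d)\,(-1)^{(m_1+m_2)(\tau+1)/d}\binom{(m_1\tau+m_1)/d-1}{m_1/d}\binom{(m_2\tau+m_2)/d}{m_2/d},$$ where $\mu$ is the Möbius function and the sum runs over positive common divisors $d$ of $m_1,m_2$. Then $n_{(m_1,m_2)}(\tau)\in\mathbb{Z}$.
   Context: For integers $b\geq 0$ and $a\in\mathbb{Z}$ the binomial coefficient is defined by: $\binom{a}{b}=1$ if $b=0$; $\binom{a}{b}$ is the usual binomial coefficient if $b\geq 1$ and $a\geq 0$; and $\binom{a}{b}=(-1)^b\binom{-a+b-1}{b}$ if $b\geq1$ and $a<0$. *)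

theory Defs
  imports Complex_Main "HOL-Computational_Algebra.Primes" "HOL-Computational_Algebra.Squarefree"
begin

definition binom_int :: "int \<Rightarrow> nat \<Rightarrow> int" where
  "binom_int a b =
     (if b = 0 then 1
      else if a \<ge> 0 then int (nat a choose b)
      else (-1) ^ b * int (nat (- a + int b - 1) choose b))"

definition moebius :: "nat \<Rightarrow> int" where
  "moebius d = (if squarefree d then (-1) ^ card (prime_factors d) else 0)"

definition neg_one_pow :: "int \<Rightarrow> int" where
  "neg_one_pow k = (if even k then 1 else -1)"

definition n_DT :: "nat \<Rightarrow> nat \<Rightarrow> int \<Rightarrow> real" where
  "n_DT m1 m2 \<tau> =
     (1 / real (m1 + m2)) *
     (\<Sum>d\<in>{d. d dvd m1 \<and> d dvd m2}.
        real_of_int (moebius d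
          * neg_one_pow ((int m1 + int m2) * (\<tau> + 1) div int d)
          * binom_int ((int m1 * \<tau> + int m1) div int d - 1) (m1 div d)
          * binom_int ((int m2 * \<tau> + int m2) div int d) (m2 div d)))"

end

theory Submission
  imports Defs "HOL-Number_Theory.Cong"
begin


lemma mult_le_self:
  fixes p m :: nat assumes "prime p" "m > 0"
  shows "multiplicity p m \<le> m"
proof -
  have "p ^ multiplicity p m dvd m" by (rule multiplicity_dvd)
  hence "p ^ multiplicity p m \<le> m" using assms(2) by (rule dvd_imp_le)
  moreover have "multiplicity p m < p ^ multiplicity p m"
  proof -
    have "multiplicity p m < 2 ^ multiplicity p m" by (rule less_exp)
    also have "\<dots> \<le> p ^ multiplicity p m"
      using prime_gt_1_nat[OF assms(1)] by (intro power_mono) auto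
    finally show ?thesis .
  qed
  ultimately show ?thesis by simp
qed

lemma card_pow_dvd:
  fixes p m K :: nat assumes "prime p" "m > 0" "m \<le> K"
  shows "card {i\<in>{1..K}. p ^ i dvd m} = multiplicity p m"
proof -
  have nu: "\<not> is_unit p" using prime_gt_1_nat[OF assms(1)] by simp
  have iff: "p ^ i dvd m \<longleftrightarrow> i \<le> multiplicity p m" for i
    using assms(2) nu by (intro power_dvd_iff_le_multiplicity) auto
  have "{i\<in>{1..K}. p ^ i dvd m} = {1..multiplicity p m}"
    using mult_le_self[OF assms(1,2)] assms(3) unfolding iff by auto
  thus ?thesis by simp
qed

lemma legendre:
  fixes p n K :: nat assumes "prime p" "n \<le> K"
  shows "multiplicity p (fact n) = (\<Sum>i\<in>{1..K}. n div p ^ i)"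
  using assms(2)
proof (induction n)
  case 0
  then show ?case by simp
next
  case (Suc n)
  have pos: "p ^ i > 0" for i using prime_gt_0_nat[OF assms(1)] by simp
  have "(\<Sum>i\<in>{1..K}. Suc n div p ^ i) = (\<Sum>i\<in>{1..K}. n div p ^ i + (if p ^ i dvd Suc n then 1 else 0))"
    by (intro sum.cong refl) (auto simp: div_Suc dvd_eq_mod_eq_0)
  also have "\<dots> = (\<Sum>i\<in>{1..K}. n div p ^ i) + card {i\<in>{1..K}. p ^ i dvd Suc n}"
    by (simp add: sum.distrib sum.If_cases Int_def)
  also have "card {i\<in>{1..K}. p ^ i dvd Suc n} = multiplicity p (Suc n)"
    using card_pow_dvd[OF assms(1)] Suc.prems by simp
  finally have e: "(\<Sum>i\<in>{1..K}. Suc n div p ^ i) = (\<Sum>i\<in>{1..K}. n div p ^ i) + multiplicity p (Suc n)" .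
  have "multiplicity p (fact (Suc n) :: nat) = multiplicity p (Suc n * fact n)"
    by (simp add: fact_Suc)
  also have "\<dots> = multiplicity p (Suc n) + multiplicity p (fact n :: nat)"
    using assms(1) by (intro prime_elem_multiplicity_mult_distrib) auto
  finally show ?case using Suc e by simp
qed

lemma div_carry:
  fixes n r q :: nat assumes "r \<le> n"
  shows "n div q = r div q + (n - r) div q + ((n - r) mod q + r mod q) div q"
proof -
  have "n = (n - r) + r" using assms by simp
  hence "n div q = ((n - r) + r) div q" by simp
  also have "\<dots> = (n - r) div q + r div q + ((n - r) mod q + r mod q) div q"
    by (rule div_add1_eq)
  finally show ?thesis by simp
qed

lemma binom_mult:
  fixes p n r K :: nat assumes "prime p" "r \<le> n" "n \<le> K"
  shows "multiplicity p (n choose r) = (\<Sum>i\<in>{1..K}. ((n - r) mod p ^ i + r mod p ^ i) div p ^ i)"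
proof -
  have f: "fact r * fact (n - r) * (n choose r) = (fact n :: nat)"
    using assms(2) by (rule binomial_fact_lemma)
  have nz: "(n choose r) \<noteq> 0" using assms(2) by simp
  have "multiplicity p (fact n :: nat) = multiplicity p (fact r * fact (n - r) * (n choose r) :: nat)"
    using f by simp
  also have "\<dots> = multiplicity p (fact r :: nat) + multiplicity p (fact (n - r) :: nat) + multiplicity p (n choose r)"
    using assms(1) nz by (simp add: prime_elem_multiplicity_mult_distrib)
  finally have e1: "multiplicity p (fact n :: nat) = multiplicity p (fact r :: nat) + multiplicity p (fact (n - r) :: nat) + multiplicity p (n choose r)" .
  have "(\<Sum>i\<in>{1..K}. n div p ^ i) = (\<Sum>i\<in>{1..K}. r div p ^ i + (n - r) div p ^ i + ((n - r) mod p ^ i + r mod p ^ i) div p ^ i)"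
    using assms(2) by (intro sum.cong refl div_carry)
  also have "\<dots> = (\<Sum>i\<in>{1..K}. r div p ^ i) + (\<Sum>i\<in>{1..K}. (n - r) div p ^ i) + (\<Sum>i\<in>{1..K}. ((n - r) mod p ^ i + r mod p ^ i) div p ^ i)"
    by (simp add: sum.distrib)
  finally have e2: "(\<Sum>i\<in>{1..K}. n div p ^ i) = (\<Sum>i\<in>{1..K}. r div p ^ i) + (\<Sum>i\<in>{1..K}. (n - r) div p ^ i) + (\<Sum>i\<in>{1..K}. ((n - r) mod p ^ i + r mod p ^ i) div p ^ i)" .
  show ?thesis
    using e1 e2 legendre[OF assms(1), of n K] legendre[OF assms(1), of r K] legendre[OF assms(1), of "n - r" K] assms
    by simp
qed

lemma dvd_between_eq:
  fixes z q :: nat assumes "q dvd z" "0 < z" "z < 2 * q"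
  shows "z = q"
proof -
  obtain c where c: "z = q * c" using assms(1) by blast
  have "c \<noteq> 0" using c assms(2) by auto
  moreover have "c < 2" using c assms(3) by (metis mult_less_cancel1 mult.commute not_less_zero)
  ultimately have "c = 1" by simp
  thus ?thesis using c by simp
qed

lemma carry_key:
  fixes q A B t :: nat
  assumes q: "q > 0" and t: "t \<ge> 2" and AB: "q dvd A + B" and nA: "\<not> q dvd A"
  shows "((A * t - 1 - A) mod q + A mod q) div q + ((B * t - B) mod q + B mod q) div q \<ge> 1"
proof (rule ccontr)
  assume c: "\<not> ?thesis"
  define a where "a = A mod q"
  define b where "b = B mod q"
  define x where "x = (A * t - 1 - A) mod q"
  define y where "y = (B * t - B) mod q"
  have a0: "a \<noteq> 0" using nA by (simp add: a_def dvd_eq_mod_eq_0)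
  have aq: "a < q" "b < q" "x < q" "y < q" using q by (auto simp: a_def b_def x_def y_def)
  have "q dvd a + b" using AB by (simp add: a_def b_def mod_add_eq dvd_eq_mod_eq_0)
  hence ab: "a + b = q" using a0 aq by (intro dvd_between_eq) auto
  have A1: "A \<ge> 1" using nA by (cases A) auto
  have "A * t \<ge> A * 2" using t by (intro mult_le_mono2)
  hence At: "A * t \<ge> A + 1" using A1 by linarith
  have Bt: "B * t \<ge> B" using t by simp
  have "A * t - 1 - A + (B * t - B) + 1 = (A * t + B * t) - (A + B)"
    using At Bt by linarith
  also have "\<dots> = (A + B) * (t - 1)" by (simp add: algebra_simps diff_mult_distrib2)
  finally have "A * t - 1 - A + (B * t - B) + 1 = (A + B) * (t - 1)" .
  hence "q dvd (A * t - 1 - A + (B * t - B)) + 1" using AB by simp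
  moreover have "(x + y + 1) mod q = (A * t - 1 - A + (B * t - B) + 1) mod q"
    unfolding x_def y_def by (metis mod_add_eq mod_add_left_eq)
  ultimately have "q dvd x + y + 1" by (simp add: dvd_eq_mod_eq_0)
  hence xy: "x + y + 1 = q" using aq by (intro dvd_between_eq) auto
  have "(x + a) div q = 0" "(y + b) div q = 0" using c by (auto simp: x_def a_def y_def b_def)
  hence "x + a < q" "y + b < q" using q by (auto simp: div_eq_0_iff)
  thus False using ab xy by simp
qed

lemma L1:
  fixes p k t A B :: nat
  assumes p: "prime p" and t: "t \<ge> 1" and A: "A \<ge> 1" and B: "B \<ge> 1"
    and dv: "p ^ k dvd A + B" and nd: "\<not> (p dvd A \<and> p dvd B)"
  shows "p ^ k dvd (A * t - 1 choose A) * (B * t choose B)"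
proof (cases "t = 1 \<or> k = 0")
  case True
  then show ?thesis
  proof
    assume "t = 1" thus ?thesis using A by (simp add: binomial_eq_0)
  next
    assume "k = 0" thus ?thesis by simp
  qed
next
  case False
  hence t2: "t \<ge> 2" and k1: "k \<ge> 1" using t by auto
  have "p dvd p ^ k" using k1 by (simp add: dvd_power)
  hence "p dvd A + B" using dv dvd_trans by blast
  hence nA: "\<not> p dvd A" using nd by (auto simp: dvd_add_right_iff)
  define K where "K = A * t + B * t"
  define c1 where "c1 i = ((A * t - 1 - A) mod p ^ i + A mod p ^ i) div p ^ i" for i
  define c2 where "c2 i = ((B * t - B) mod p ^ i + B mod p ^ i) div p ^ i" for i
  have key: "c1 i + c2 i \<ge> 1" if "i \<in> {1..k}" for i
  proof -
    have "p ^ i dvd p ^ k" using that by (simp add: le_imp_power_dvd)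
    hence "p ^ i dvd A + B" using dv dvd_trans by blast
    moreover have "\<not> p ^ i dvd A"
    proof
      assume "p ^ i dvd A"
      moreover have "p dvd p ^ i" using that by (simp add: dvd_power)
      ultimately show False using nA dvd_trans by blast
    qed
    ultimately show ?thesis unfolding c1_def c2_def
      using carry_key[of "p ^ i" t A B] t2 prime_gt_0_nat[OF p] by simp
  qed
  have Akt: "A \<le> A * t - 1" using t2 A
  proof -
    have "A * t \<ge> A * 2" using t2 by (intro mult_le_mono2)
    thus ?thesis using A by linarith
  qed
  have m1: "multiplicity p (A * t - 1 choose A) = (\<Sum>i\<in>{1..K}. c1 i)"
  proof -
    have "A * t - 1 \<le> K" by (simp add: K_def)
    from binom_mult[OF p Akt this] show ?thesis unfolding c1_def .
  qed
  have m2: "multiplicity p (B * t choose B) = (\<Sum>i\<in>{1..K}. c2 i)"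
  proof -
    have "B \<le> B * t" "B * t \<le> K" using t by (auto simp: K_def)
    from binom_mult[OF p this] show ?thesis unfolding c2_def .
  qed
  have "p ^ k \<le> A + B" using dv by (intro dvd_imp_le) (use A in auto)
  moreover have "k < p ^ k"
  proof -
    have "k < 2 ^ k" by (rule less_exp)
    also have "\<dots> \<le> p ^ k" using prime_gt_1_nat[OF p] by (intro power_mono) auto
    finally show ?thesis .
  qed
  moreover have "A + B \<le> K" unfolding K_def using t by (metis add_le_mono mult_le_mono2 mult_1_right)
  ultimately have kK: "k \<le> K" by linarith
  have "k = (\<Sum>i\<in>{1..k}. (1::nat))" by simp
  also have "\<dots> \<le> (\<Sum>i\<in>{1..k}. c1 i + c2 i)" using key by (intro sum_mono) auto
  also have "\<dots> \<le> (\<Sum>i\<in>{1..K}. c1 i + c2 i)" using kK by (intro sum_mono2) auto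
  also have "\<dots> = multiplicity p (A * t - 1 choose A) + multiplicity p (B * t choose B)"
    by (simp only: m1 m2 sum.distrib)
  also have "\<dots> = multiplicity p ((A * t - 1 choose A) * (B * t choose B))"
    using p Akt t by (subst prime_elem_multiplicity_mult_distrib) auto
  finally show ?thesis by (rule multiplicity_dvd')
qed



definition fI :: "int \<Rightarrow> int \<Rightarrow> int" where "fI p j = (if p dvd j then 1 else j)"
definition gI :: "int \<Rightarrow> int \<Rightarrow> int" where "gI p j = (if p dvd j then 1 else -1)"

lemma refl_cong:
  fixes p q K :: int assumes "p dvd K" "q dvd K" "finite S"
  shows "[prod (fI p) S = prod (gI p) S * prod (fI p) ((\<lambda>j. K - j) ` S)] (mod q)"
proof -
  have inj: "inj_on (\<lambda>j. K - j) S" by (auto simp: inj_on_def)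
  have "prod (gI p) S * prod (fI p) ((\<lambda>j. K - j) ` S) = prod (\<lambda>j. gI p j * fI p (K - j)) S"
    by (simp add: prod.reindex[OF inj] prod.distrib)
  moreover have "[prod (fI p) S = prod (\<lambda>j. gI p j * fI p (K - j)) S] (mod q)"
  proof (rule cong_prod)
    fix j assume "j \<in> S"
    show "[fI p j = gI p j * fI p (K - j)] (mod q)"
    proof (cases "p dvd j")
      case True
      hence "p dvd K - j" using assms(1) by simp
      thus ?thesis using True by (simp add: fI_def gI_def)
    next
      case False
      have "\<not> p dvd K - j"
      proof
        assume "p dvd K - j"
        from dvd_diff[OF assms(1) this] show False using False by simp
      qed
      hence "gI p j * fI p (K - j) = j - K" using False by (simp add: fI_def gI_def)
      moreover have "[j = j - K] (mod q)" using assms(2) by (simp add: cong_iff_dvd_diff)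
      ultimately show ?thesis using False by (simp add: fI_def)
    qed
  qed
  ultimately show ?thesis by simp
qed

lemma sign_shift:
  fixes p c :: int assumes "p dvd c"
  shows "prod (gI p) ((+) c ` S) = prod (gI p) S"
proof -
  have inj: "inj_on ((+) c) S" by (auto simp: inj_on_def)
  have "gI p (c + j) = gI p j" for j using assms by (simp add: gI_def dvd_add_right_iff)
  thus ?thesis by (simp add: prod.reindex[OF inj] o_def)
qed

lemma fI_coprime:
  fixes p :: int assumes "prime p"
  shows "coprime (fI p c) (p ^ s)"
proof (cases "p dvd c")
  case True thus ?thesis by (simp add: fI_def)
next
  case False
  hence "coprime c (p ^ s)" using assms by (intro prime_imp_power_coprime) 
  thus ?thesis using False by (simp add: fI_def)
qed

lemma shift_cong:
  fixes p M :: int and c :: nat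
  assumes p: "prime p" and pM: "p dvd M" and qM: "p ^ s dvd M" and M0: "M \<ge> 0"
  shows "[prod (fI p) {int c..<int c + M} = prod (fI p) {0..<M}] (mod p ^ s)"
proof (induction c)
  case 0 then show ?case by simp
next
  case (Suc c)
  define X where "X c = prod (fI p) {int c..<int c + M}" for c
  have e1: "{int c..<int c + M + 1} = insert (int c + M) {int c..<int c + M}" using M0 by auto
  have e2: "{int c..<int c + M + 1} = insert (int c) {int (Suc c)..<int (Suc c) + M}" using M0 by auto
  have "X c * fI p (int c + M) = prod (fI p) {int c..<int c + M + 1}"
    unfolding X_def e1 by (simp add: mult.commute)
  also have "\<dots> = fI p (int c) * X (Suc c)"
    unfolding X_def e2 by simp
  finally have eq: "X c * fI p (int c + M) = fI p (int c) * X (Suc c)" .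
  have "[fI p (int c + M) = fI p (int c)] (mod p ^ s)"
  proof (cases "p dvd int c")
    case True
    hence "p dvd int c + M" using pM by simp
    thus ?thesis using True by (simp add: fI_def)
  next
    case False
    hence "\<not> p dvd int c + M" using pM by (simp add: dvd_add_left_iff)
    moreover have "[int c + M = int c] (mod p ^ s)" using qM by (simp add: cong_iff_dvd_diff)
    ultimately show ?thesis using False by (simp add: fI_def)
  qed
  hence "[X c * fI p (int c + M) = X c * fI p (int c)] (mod p ^ s)" by (intro cong_mult cong_refl)
  hence "[X c * fI p (int c) = X (Suc c) * fI p (int c)] (mod p ^ s)"
    using eq by (simp add: cong_sym_eq mult.commute)
  hence "[X c = X (Suc c)] (mod p ^ s)" using cong_mult_rcancel fI_coprime[OF p] by blast
  moreover have "[X c = X 0] (mod p ^ s)" using Suc.IH unfolding X_def by simp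
  ultimately have "[X (Suc c) = X 0] (mod p ^ s)" using cong_sym cong_trans by blast
  thus ?case unfolding X_def by simp
qed

lemma units_cong:
  fixes p a b T :: int
  assumes p: "prime p" and pa: "p dvd a" and pb: "p dvd b" and q: "p ^ s dvd a + b"
    and a0: "a \<ge> 0" and b0: "b \<ge> 0" and T: "T \<ge> 1"
  shows "[prod (fI p) {b * T - b<..b * T} * prod (fI p) {a * T - a..<a * T}
          = prod (fI p) {0<..a} * prod (fI p) {0<..b}] (mod p ^ s)"
proof -
  define M where "M = a + b"
  define X0 where "X0 = prod (fI p) {0..<M}"
  define G where "G = prod (gI p) {0<..b}"
  have pM: "p dvd M" using pa pb by (simp add: M_def)
  have qM: "p ^ s dvd M" using q by (simp add: M_def)
  have M0: "M \<ge> 0" using a0 b0 by (simp add: M_def)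
  have aT: "a * T \<ge> a" using T a0 by (metis mult_le_cancel_left1 not_le mult_nonneg_nonpos order.trans zero_le_one less_le_not_le)
  have bT: "b * T \<ge> b" using T b0 by (metis mult_le_cancel_left1 not_le mult_nonneg_nonpos order.trans zero_le_one less_le_not_le)
  have s1: "(\<lambda>j. M * T - j) ` {b * T - b<..b * T} = {a * T..<a * T + b}"
  proof (rule set_eqI, rule iffI)
    fix x assume "x \<in> (\<lambda>j. M * T - j) ` {b * T - b<..b * T}"
    then obtain j where "j \<in> {b * T - b<..b * T}" "x = M * T - j" by blast
    thus "x \<in> {a * T..<a * T + b}" by (auto simp: M_def algebra_simps)
  next
    fix x assume x: "x \<in> {a * T..<a * T + b}"
    have "M * T - x \<in> {b * T - b<..b * T}" using x by (auto simp: M_def algebra_simps)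
    moreover have "x = M * T - (M * T - x)" by simp
    ultimately show "x \<in> (\<lambda>j. M * T - j) ` {b * T - b<..b * T}" by blast
  qed
  have pMT: "p dvd M * T" "p ^ s dvd M * T" using pM qM by auto
  have c1: "[prod (fI p) {b * T - b<..b * T} = prod (gI p) {b * T - b<..b * T} * prod (fI p) {a * T..<a * T + b}] (mod p ^ s)"
    using refl_cong[OF pMT, of "{b * T - b<..b * T}"] s1 by simp
  have sh: "{b * T - b<..b * T} = (+) (b * T - b) ` {0<..b}"
  proof (rule set_eqI, rule iffI)
    fix x assume x: "x \<in> {b * T - b<..b * T}"
    have "x - (b * T - b) \<in> {0<..b}" using x by auto
    moreover have "x = (b * T - b) + (x - (b * T - b))" by simp
    ultimately show "x \<in> (+) (b * T - b) ` {0<..b}" by blast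
  qed auto
  have "p dvd b * T - b" using pb by simp
  hence G1: "prod (gI p) {b * T - b<..b * T} = G" unfolding G_def sh by (rule sign_shift)
  have s4: "prod (fI p) {a * T - a..<a * T} * prod (fI p) {a * T..<a * T + b} = prod (fI p) {a * T - a..<a * T - a + M}"
  proof -
    have "{a * T - a..<a * T} \<union> {a * T..<a * T + b} = {a * T - a..<a * T - a + M}"
      using a0 b0 by (auto simp: M_def)
    moreover have "{a * T - a..<a * T} \<inter> {a * T..<a * T + b} = {}" by auto
    ultimately show ?thesis by (metis finite_atLeastLessThan_int prod.union_disjoint)
  qed
  have s5: "[prod (fI p) {a * T - a..<a * T - a + M} = X0] (mod p ^ s)"
  proof -
    have "int (nat (a * T - a)) = a * T - a" using aT by simp
    thus ?thesis using shift_cong[OF p pM qM M0, of "nat (a * T - a)"] unfolding X0_def by simp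
  qed
  have L: "[prod (fI p) {b * T - b<..b * T} * prod (fI p) {a * T - a..<a * T} = G * X0] (mod p ^ s)"
  proof -
    have "[prod (fI p) {b * T - b<..b * T} * prod (fI p) {a * T - a..<a * T}
           = (G * prod (fI p) {a * T..<a * T + b}) * prod (fI p) {a * T - a..<a * T}] (mod p ^ s)"
      using c1 G1 by (intro cong_mult cong_refl) simp
    also have "(G * prod (fI p) {a * T..<a * T + b}) * prod (fI p) {a * T - a..<a * T}
             = G * prod (fI p) {a * T - a..<a * T - a + M}"
      using s4 by (simp add: algebra_simps)
    also have "[\<dots> = G * X0] (mod p ^ s)" using s5 by (intro cong_mult cong_refl)
    finally show ?thesis .
  qed
  have s2: "(\<lambda>j. M - j) ` {0<..b} = {a..<M}"
  proof (rule set_eqI, rule iffI)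
    fix x assume "x \<in> (\<lambda>j. M - j) ` {0<..b}"
    thus "x \<in> {a..<M}" by (auto simp: M_def)
  next
    fix x assume x: "x \<in> {a..<M}"
    have "M - x \<in> {0<..b}" using x by (auto simp: M_def)
    moreover have "x = M - (M - x)" by simp
    ultimately show "x \<in> (\<lambda>j. M - j) ` {0<..b}" by blast
  qed
  have c2: "[prod (fI p) {0<..b} = G * prod (fI p) {a..<M}] (mod p ^ s)"
    using refl_cong[OF pM qM, of "{0<..b}"] s2 unfolding G_def by simp
  have s6: "prod (fI p) {0<..a} = prod (fI p) {0..<a}"
  proof (cases "a = 0")
    case True thus ?thesis by simp
  next
    case False
    hence "{0<..a} = insert a {0<..<a}" "{0..<a} = insert 0 {0<..<a}" using a0 by auto
    thus ?thesis using pa by (simp add: fI_def)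
  qed
  have s7: "prod (fI p) {0..<a} * prod (fI p) {a..<M} = X0"
  proof -
    have "{0..<a} \<union> {a..<M} = {0..<M}" using a0 b0 by (auto simp: M_def)
    moreover have "{0..<a} \<inter> {a..<M} = {}" by auto
    ultimately show ?thesis unfolding X0_def by (metis finite_atLeastLessThan_int prod.union_disjoint)
  qed
  have R: "[prod (fI p) {0<..a} * prod (fI p) {0<..b} = G * X0] (mod p ^ s)"
  proof -
    have "[prod (fI p) {0<..a} * prod (fI p) {0<..b} = prod (fI p) {0..<a} * (G * prod (fI p) {a..<M})] (mod p ^ s)"
      unfolding s6 using c2 by (intro cong_mult cong_refl)
    also have "prod (fI p) {0..<a} * (G * prod (fI p) {a..<M}) = G * X0"
      using s7 by (simp add: algebra_simps)
    finally show ?thesis .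
  qed
  show ?thesis using L R cong_sym cong_trans by blast
qed



definition fN :: "nat \<Rightarrow> nat \<Rightarrow> nat" where "fN p j = (if p dvd j then 1 else j)"

lemma split_prod_nat:
  fixes S :: "nat set" assumes "finite S"
  shows "(\<Prod>j\<in>S. j) = (\<Prod>j\<in>{j\<in>S. p dvd j}. j) * prod (fN p) S"
proof -
  have "(\<Prod>j\<in>S. j) = (\<Prod>j\<in>S. (if p dvd j then j else 1) * fN p j)"
    by (intro prod.cong refl) (simp add: fN_def)
  also have "\<dots> = (\<Prod>j\<in>S. (if p dvd j then j else 1)) * prod (fN p) S"
    by (simp add: prod.distrib)
  also have "(\<Prod>j\<in>S. (if p dvd j then j else 1)) = (\<Prod>j\<in>{j\<in>S. p dvd j}. j)"
    using assms by (simp add: prod.inter_filter)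
  finally show ?thesis .
qed

lemma prod_times_image:
  fixes p :: nat and T :: "nat set" assumes "p > 0" "finite T"
  shows "(\<Prod>j\<in>(\<lambda>x. p * x) ` T. j) = p ^ card T * (\<Prod>x\<in>T. x)"
proof -
  have inj: "inj_on (\<lambda>x. p * x) T" using assms by (auto simp: inj_on_def)
  show ?thesis by (simp add: prod.reindex[OF inj] prod.distrib)
qed

lemma split_ivl1:
  fixes p a b :: nat assumes "p > 0"
  shows "(\<Prod>j\<in>{p * a..<p * b}. j) = p ^ (b - a) * (\<Prod>x\<in>{a..<b}. x) * prod (fN p) {p * a..<p * b}"
proof -
  have "{j\<in>{p * a..<p * b}. p dvd j} = (\<lambda>x. p * x) ` {a..<b}"
  proof (rule set_eqI, rule iffI)
    fix j assume j: "j \<in> {j\<in>{p * a..<p * b}. p dvd j}"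
    then obtain x where x: "j = p * x" by auto
    hence "x \<in> {a..<b}" using j assms by auto
    thus "j \<in> (\<lambda>x. p * x) ` {a..<b}" using x by blast
  qed (use assms in auto)
  thus ?thesis using split_prod_nat[of "{p * a..<p * b}" p] prod_times_image[OF assms, of "{a..<b}"]
    by simp
qed

lemma split_ivl2:
  fixes p a b :: nat assumes "p > 0"
  shows "(\<Prod>j\<in>{p * a<..p * b}. j) = p ^ (b - a) * (\<Prod>x\<in>{a<..b}. x) * prod (fN p) {p * a<..p * b}"
proof -
  have "{j\<in>{p * a<..p * b}. p dvd j} = (\<lambda>x. p * x) ` {a<..b}"
  proof (rule set_eqI, rule iffI)
    fix j assume j: "j \<in> {j\<in>{p * a<..p * b}. p dvd j}"
    then obtain x where x: "j = p * x" by auto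
    hence "x \<in> {a<..b}" using j assms by auto
    thus "j \<in> (\<lambda>x. p * x) ` {a<..b}" using x by blast
  qed (use assms in auto)
  thus ?thesis using split_prod_nat[of "{p * a<..p * b}" p] prod_times_image[OF assms, of "{a<..b}"]
    by simp
qed

lemma choose_fact_prod:
  fixes n k :: nat assumes "k \<le> n"
  shows "(n choose k) * fact k = (\<Prod>j\<in>{n - k<..n}. j)"
proof -
  have f: "fact n = fact (n - k) * ((n choose k) * fact k :: nat)"
    using binomial_fact_lemma[OF assms] by (simp add: algebra_simps)
  have "fact n div fact (n - k) = (\<Prod>{n - k + 1..n} :: nat)"
    using assms by (intro fact_div_fact) simp
  moreover have "{n - k + 1..n} = {n - k<..n}" by auto
  moreover have "fact n div fact (n - k) = (n choose k) * fact k"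
    using f by simp
  ultimately show ?thesis by simp
qed

lemma fact_ivl: "(fact n :: nat) = (\<Prod>j\<in>{0<..n}. j)"
proof -
  have "{0<..n} = {1..n}" by auto
  thus ?thesis by (simp add: fact_prod)
qed

lemma choose_fact_prod2:
  fixes m k :: nat assumes "k < m"
  shows "(m - 1 choose k) * fact k = (\<Prod>j\<in>{m - k..<m}. j)"
proof -
  have "{m - 1 - k<..m - 1} = {m - k..<m}" using assms by auto
  thus ?thesis using choose_fact_prod[of k "m - 1"] assms by simp
qed

lemma exact1:
  fixes p A t :: nat assumes p: "p > 0" and t: "t \<ge> 2" and A: "A \<ge> 1"
  shows "((p * A) * t - 1 choose (p * A)) * prod (fN p) {0<..p * A}
       = (A * t - 1 choose A) * prod (fN p) {p * (A * t - A)..<p * (A * t)}"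
proof -
  have At: "A < A * t"
  proof -
    have "A * t \<ge> A * 2" using t by (intro mult_le_mono2)
    thus ?thesis using A by linarith
  qed
  have pAt: "p * A < p * A * t" using At p by simp
  have "((p * A) * t - 1 choose (p * A)) * fact (p * A) = (\<Prod>j\<in>{p * A * t - p * A..<p * A * t}. j)"
    using choose_fact_prod2[OF pAt] .
  also have "{p * A * t - p * A..<p * A * t} = {p * (A * t - A)..<p * (A * t)}"
    by (simp add: diff_mult_distrib2 mult.assoc)
  also have "(\<Prod>j\<in>{p * (A * t - A)..<p * (A * t)}. j) = p ^ (A * t - (A * t - A)) * (\<Prod>x\<in>{A * t - A..<A * t}. x) * prod (fN p) {p * (A * t - A)..<p * (A * t)}"
    by (rule split_ivl1[OF p])
  also have "(\<Prod>x\<in>{A * t - A..<A * t}. x) = (A * t - 1 choose A) * fact A"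
    using choose_fact_prod2[OF At] by simp
  also have "A * t - (A * t - A) = A" using At by simp
  finally have e1: "((p * A) * t - 1 choose (p * A)) * fact (p * A) = p ^ A * ((A * t - 1 choose A) * fact A) * prod (fN p) {p * (A * t - A)..<p * (A * t)}" .
  have "(fact (p * A) :: nat) = (\<Prod>j\<in>{p * 0<..p * A}. j)" using fact_ivl by simp
  also have "\<dots> = p ^ A * fact A * prod (fN p) {0<..p * A}"
    using split_ivl2[OF p, of 0 A] fact_ivl[of A] by simp
  finally have e2: "(fact (p * A) :: nat) = p ^ A * fact A * prod (fN p) {0<..p * A}" .
  have "(p ^ A * fact A) * (((p * A) * t - 1 choose (p * A)) * prod (fN p) {0<..p * A})
      = (p ^ A * fact A) * ((A * t - 1 choose A) * prod (fN p) {p * (A * t - A)..<p * (A * t)})"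
    using e1 e2 by (simp add: algebra_simps)
  moreover have "p ^ A * fact A \<noteq> 0" using p by simp
  ultimately show ?thesis using mult_left_cancel by blast
qed

lemma exact2:
  fixes p B t :: nat assumes p: "p > 0" and t: "t \<ge> 1"
  shows "((p * B) * t choose (p * B)) * prod (fN p) {0<..p * B}
       = (B * t choose B) * prod (fN p) {p * (B * t - B)<..p * (B * t)}"
proof -
  have Bt: "B \<le> B * t" using t by simp
  have pBt: "p * B \<le> p * B * t" using t by simp
  have "((p * B) * t choose (p * B)) * fact (p * B) = (\<Prod>j\<in>{p * B * t - p * B<..p * B * t}. j)"
    using choose_fact_prod[OF pBt] .
  also have "{p * B * t - p * B<..p * B * t} = {p * (B * t - B)<..p * (B * t)}"
    by (simp add: diff_mult_distrib2 mult.assoc)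
  also have "(\<Prod>j\<in>{p * (B * t - B)<..p * (B * t)}. j) = p ^ (B * t - (B * t - B)) * (\<Prod>x\<in>{B * t - B<..B * t}. x) * prod (fN p) {p * (B * t - B)<..p * (B * t)}"
    by (rule split_ivl2[OF p])
  also have "(\<Prod>x\<in>{B * t - B<..B * t}. x) = (B * t choose B) * fact B"
    using choose_fact_prod[OF Bt] by simp
  also have "B * t - (B * t - B) = B" using Bt by simp
  finally have e1: "((p * B) * t choose (p * B)) * fact (p * B) = p ^ B * ((B * t choose B) * fact B) * prod (fN p) {p * (B * t - B)<..p * (B * t)}" .
  have "(fact (p * B) :: nat) = (\<Prod>j\<in>{p * 0<..p * B}. j)" using fact_ivl by simp
  also have "\<dots> = p ^ B * fact B * prod (fN p) {0<..p * B}"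
    using split_ivl2[OF p, of 0 B] fact_ivl[of B] by simp
  finally have e2: "(fact (p * B) :: nat) = p ^ B * fact B * prod (fN p) {0<..p * B}" .
  have "(p ^ B * fact B) * (((p * B) * t choose (p * B)) * prod (fN p) {0<..p * B})
      = (p ^ B * fact B) * ((B * t choose B) * prod (fN p) {p * (B * t - B)<..p * (B * t)})"
    using e1 e2 by (simp add: algebra_simps)
  moreover have "p ^ B * fact B \<noteq> 0" using p by simp
  ultimately show ?thesis using mult_left_cancel by blast
qed

lemma int_prod_fN: "int (prod (fN p) S) = prod (fI (int p)) (int ` S)"
proof -
  have inj: "inj_on int S" by (auto simp: inj_on_def)
  have "fI (int p) (int j) = int (fN p j)" for j by (simp add: fI_def fN_def)
  thus ?thesis by (simp add: prod.reindex[OF inj] o_def)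
qed

lemma image_int_gtam: "int ` {a<..b} = {int a<..int b}"
proof (rule set_eqI, rule iffI)
  fix x assume "x \<in> {int a<..int b}"
  hence "nat x \<in> {a<..b}" "x = int (nat x)" by auto
  thus "x \<in> int ` {a<..b}" by blast
qed auto

lemma prod_fI_coprime:
  fixes p :: int assumes "prime p"
  shows "coprime (prod (fI p) S) (p ^ s)"
  using fI_coprime[OF assms] by (intro prod_coprime_left) auto

lemma L2:
  fixes p s t A B :: nat
  assumes p: "prime p" and t: "t \<ge> 1" and A: "A \<ge> 1" and B: "B \<ge> 1"
    and dv: "p ^ s dvd p * (A + B)"
  shows "[int (((p * A) * t - 1 choose (p * A)) * ((p * B) * t choose (p * B)))
        = int ((A * t - 1 choose A) * (B * t choose B))] (mod int p ^ s)"
proof (cases "t = 1")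
  case True
  have "p * A \<ge> 1" using A prime_gt_0_nat[OF p] by simp
  thus ?thesis using True A by (simp add: binomial_eq_0)
next
  case False
  hence t2: "t \<ge> 2" using t by simp
  have p0: "p > 0" using prime_gt_0_nat[OF p] .
  define Ua where "Ua = prod (fN p) {0<..p * A}"
  define Ub where "Ub = prod (fN p) {0<..p * B}"
  define V1 where "V1 = prod (fN p) {p * (B * t - B)<..p * (B * t)}"
  define V2 where "V2 = prod (fN p) {p * (A * t - A)..<p * (A * t)}"
  define P1 where "P1 = ((p * A) * t - 1 choose (p * A)) * ((p * B) * t choose (p * B))"
  define P0 where "P0 = (A * t - 1 choose A) * (B * t choose B)"
  have ex: "P1 * (Ua * Ub) = P0 * (V1 * V2)"
  proof -
    have e1: "((p * A) * t - 1 choose (p * A)) * Ua = (A * t - 1 choose A) * V2"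
      unfolding Ua_def V2_def by (rule exact1[OF p0 t2 A])
    have e2: "((p * B) * t choose (p * B)) * Ub = (B * t choose B) * V1"
      unfolding Ub_def V1_def by (rule exact2[OF p0 t])
    have "P1 * (Ua * Ub) = (((p * A) * t - 1 choose (p * A)) * Ua) * (((p * B) * t choose (p * B)) * Ub)"
      unfolding P1_def by (simp only: ac_simps)
    also have "\<dots> = ((A * t - 1 choose A) * V2) * ((B * t choose B) * V1)" by (simp only: e1 e2)
    also have "\<dots> = P0 * (V1 * V2)" unfolding P0_def by (simp only: ac_simps)
    finally show ?thesis .
  qed
  have pI: "prime (int p)" using p by simp
  define a where "a = int (p * A)"
  define b where "b = int (p * B)"
  define T where "T = int t"
  have Bt: "B \<le> B * t" "A \<le> A * t" using t by auto
  have iV1: "int V1 = prod (fI (int p)) {b * T - b<..b * T}"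
  proof -
    have "int (p * (B * t - B)) = b * T - b" "int (p * (B * t)) = b * T"
      using Bt unfolding b_def T_def by (auto simp: of_nat_diff algebra_simps)
    thus ?thesis unfolding V1_def int_prod_fN image_int_gtam by simp
  qed
  have iV2: "int V2 = prod (fI (int p)) {a * T - a..<a * T}"
  proof -
    have "int (p * (A * t - A)) = a * T - a" "int (p * (A * t)) = a * T"
      using Bt unfolding a_def T_def by (auto simp: of_nat_diff algebra_simps)
    thus ?thesis unfolding V2_def int_prod_fN image_int_atLeastLessThan by simp
  qed
  have iUa: "int Ua = prod (fI (int p)) {0<..a}"
    unfolding Ua_def int_prod_fN image_int_gtam a_def by simp
  have iUb: "int Ub = prod (fI (int p)) {0<..b}"
    unfolding Ub_def int_prod_fN image_int_gtam b_def by simp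
  have "int (p ^ s) dvd int (p * (A + B))" using dv by (simp only: of_nat_dvd_iff)
  hence qab: "int p ^ s dvd a + b" unfolding a_def b_def by (simp add: algebra_simps)
  have uc: "[int V1 * int V2 = int Ua * int Ub] (mod int p ^ s)"
    unfolding iV1 iV2 iUa iUb
  proof (rule units_cong[OF pI])
    show "int p dvd a" "int p dvd b" unfolding a_def b_def by simp_all
    show "int p ^ s dvd a + b" by (rule qab)
    show "a \<ge> 0" "b \<ge> 0" "T \<ge> 1" using t unfolding a_def b_def T_def by simp_all
  qed
  have cop: "coprime (int Ua * int Ub) (int p ^ s)"
    unfolding iUa iUb using prod_fI_coprime[OF pI, of "{0<..a}" s] prod_fI_coprime[OF pI, of "{0<..b}" s]
    by (rule coprime_mult_left_iff[THEN iffD2, OF conjI])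
  have "int P1 * (int Ua * int Ub) = int P0 * (int V1 * int V2)"
    using ex by (simp only: of_nat_mult[symmetric])
  also have "[\<dots> = int P0 * (int Ua * int Ub)] (mod int p ^ s)"
    using uc by (rule cong_scalar_left)
  finally have "[int P1 * (int Ua * int Ub) = int P0 * (int Ua * int Ub)] (mod int p ^ s)" .
  hence "[int P1 = int P0] (mod int p ^ s)" using cong_mult_rcancel[OF cop] by blast
  thus ?thesis unfolding P1_def P0_def .
qed



lemma moebius_p_coprime:
  fixes p e :: nat assumes p: "prime p" and e: "e > 0" and nd: "\<not> p dvd e"
  shows "moebius (p * e) = - moebius e"
proof -
  have cop: "coprime p e" using p nd by (simp add: prime_imp_coprime)
  have sq: "squarefree (p * e) \<longleftrightarrow> squarefree e"
    using squarefree_mult_coprime[OF cop squarefree_prime[OF p]] squarefree_multD(2) by blast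
  have pf: "prime_factors (p * e) = insert p (prime_factors e)"
    using prime_factors_product[of p e] p e prime_prime_factors[OF p] by auto
  have "p \<notin> prime_factors e" using nd by (auto simp: in_prime_factors_iff)
  hence "card (prime_factors (p * e)) = Suc (card (prime_factors e))"
    unfolding pf by simp
  thus ?thesis unfolding moebius_def using sq by simp
qed

lemma moebius_p_dvd:
  fixes p e :: nat assumes p: "prime p" and d: "p dvd e"
  shows "moebius (p * e) = 0"
proof -
  have "p ^ 2 dvd p * e" using d by (auto simp: power2_eq_square)
  moreover have "\<not> p dvd 1" using prime_gt_1_nat[OF p] by simp
  ultimately have "\<not> squarefree (p * e)" unfolding squarefree_def by blast
  thus ?thesis by (simp add: moebius_def)
qed

definition PP :: "nat \<Rightarrow> nat \<Rightarrow> nat \<Rightarrow> nat" where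
  "PP t A B = (A * t - 1 choose A) * (B * t choose B)"

definition term_d :: "nat \<Rightarrow> nat \<Rightarrow> nat \<Rightarrow> nat \<Rightarrow> int" where
  "term_d m1 m2 t d = moebius d * (-1) ^ ((m1 div d + m2 div d) * t) * int (PP t (m1 div d) (m2 div d))"

lemma sign_step:
  fixes p k t A B :: nat
  assumes p: "prime p" and dv: "p ^ k dvd p * (A + B)"
    and c: "[int X1 = int X0] (mod int p ^ k)"
  shows "int p ^ k dvd (-1) ^ ((p * A + p * B) * t) * int X1 - (-1) ^ ((A + B) * t) * int X0"
proof -
  have d1: "int p ^ k dvd int X1 - int X0" using c by (simp add: cong_iff_dvd_diff)
  have ee: "(p * A + p * B) * t = p * ((A + B) * t)" by (simp add: algebra_simps)
  show ?thesis
  proof (cases "p = 2")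
    case False
    have "p \<ge> 2" using p by (rule prime_ge_2_nat)
    hence "p > 2" using False by linarith
    hence "odd p" using p prime_odd_nat by simp
    hence "even (p * ((A + B) * t)) \<longleftrightarrow> even ((A + B) * t)"
      by (simp only: even_mult_iff) simp
    hence s: "((-1::int) ^ ((p * A + p * B) * t)) = (-1) ^ ((A + B) * t)"
      unfolding ee by (simp only: minus_one_power_iff) 
    have "(-1) ^ ((p * A + p * B) * t) * int X1 - (-1) ^ ((A + B) * t) * int X0
          = (-1) ^ ((A + B) * t) * (int X1 - int X0)"
      unfolding s by (simp only: right_diff_distrib)
    thus ?thesis using d1 by (simp only: dvd_mult)
  next
    case True
    have s1: "((-1::int) ^ ((p * A + p * B) * t)) = 1"
      unfolding ee True by (simp only: minus_one_power_iff) simp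
    show ?thesis
    proof (cases "even ((A + B) * t)")
      case True
      hence "((-1::int) ^ ((A + B) * t)) = 1" by (simp only: minus_one_power_iff) simp
      thus ?thesis using s1 d1 by simp
    next
      case odd: False
      hence oAB: "odd (A + B)" by simp
      have k1: "k \<le> 1"
      proof (rule ccontr)
        assume "\<not> k \<le> 1"
        hence "(2::nat) ^ 2 dvd 2 ^ k" by (intro le_imp_power_dvd) simp
        hence "(4::nat) dvd 2 * (A + B)" using dv True dvd_trans by simp
        hence "2 dvd A + B" by presburger
        thus False using oAB by simp
      qed
      have "int p ^ k dvd 2"
      proof (cases "k = 0")
        case True thus ?thesis by simp
      next
        case False hence "k = 1" using k1 by simp
        thus ?thesis using \<open>p = 2\<close> by simp
      qed
      hence d2: "int p ^ k dvd 2 * int X0" by (rule dvd_mult2)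
      have m1: "((-1::int) ^ ((A + B) * t)) = -1" using odd by (simp only: minus_one_power_iff) simp
      have "(-1) ^ ((p * A + p * B) * t) * int X1 - (-1) ^ ((A + B) * t) * int X0
            = (int X1 - int X0) + 2 * int X0"
        unfolding s1 m1 by simp
      thus ?thesis using d1 d2 by (simp only: dvd_add)
    qed
  qed
qed

lemma coprime_pow_dvd:
  fixes p k d x :: nat assumes p: "prime p" and nd: "\<not> p dvd d" and dv: "p ^ k dvd d * x"
  shows "p ^ k dvd x"
proof -
  have "coprime d (p ^ k)" using p nd by (rule prime_imp_power_coprime)
  hence "coprime (p ^ k) d" by (simp add: coprime_commute)
  thus ?thesis using dv by (simp add: coprime_dvd_mult_right_iff)
qed

lemma key_A:
  fixes p k m1 m2 t d :: nat
  assumes p: "prime p" and m1: "m1 \<ge> 1" and m2: "m2 \<ge> 1" and t: "t \<ge> 1"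
    and dv: "p ^ k dvd m1 + m2" and nd: "\<not> (p dvd m1 \<and> p dvd m2)"
    and d1: "d dvd m1" and d2: "d dvd m2"
  shows "int p ^ k dvd term_d m1 m2 t d"
proof -
  define A where "A = m1 div d"
  define B where "B = m2 div d"
  have eA: "m1 = d * A" using d1 by (simp add: A_def)
  have eB: "m2 = d * B" using d2 by (simp add: B_def)
  have A1: "A \<ge> 1" using eA m1 by (cases A) auto
  have B1: "B \<ge> 1" using eB m2 by (cases B) auto
  have pd: "\<not> p dvd d" using nd d1 d2 dvd_trans by blast
  have "p ^ k dvd d * (A + B)" using dv eA eB by (simp add: algebra_simps)
  hence dAB: "p ^ k dvd A + B" using coprime_pow_dvd[OF p pd] by blast
  have ndAB: "\<not> (p dvd A \<and> p dvd B)" using nd eA eB by auto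
  have "p ^ k dvd PP t A B" unfolding PP_def using L1[OF p t A1 B1 dAB ndAB] .
  hence "int p ^ k dvd int (PP t A B)" by (metis of_nat_dvd_iff of_nat_power)
  thus ?thesis unfolding term_d_def A_def B_def by (simp add: dvd_mult)
qed

lemma key_B:
  fixes p k m1 m2 t e :: nat
  assumes p: "prime p" and m1: "m1 \<ge> 1" and m2: "m2 \<ge> 1" and t: "t \<ge> 1"
    and dv: "p ^ k dvd m1 + m2" and pe: "\<not> p dvd e"
    and d1: "p * e dvd m1" and d2: "p * e dvd m2"
  shows "int p ^ k dvd term_d m1 m2 t e + term_d m1 m2 t (p * e)"
proof -
  define A where "A = m1 div (p * e)"
  define B where "B = m2 div (p * e)"
  have eA: "m1 = (p * e) * A" using d1 by (simp add: A_def)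
  have eB: "m2 = (p * e) * B" using d2 by (simp add: B_def)
  have e0: "e > 0" using eA m1 by (cases e) auto
  have p0: "p > 0" using prime_gt_0_nat[OF p] .
  have A1: "A \<ge> 1" using eA m1 by (cases A) auto
  have B1: "B \<ge> 1" using eB m2 by (cases B) auto
  have qA: "m1 div e = p * A" using eA e0 by (simp add: mult.assoc)
  have qB: "m2 div e = p * B" using eB e0 by (simp add: mult.assoc)
  have rA: "m1 div (p * e) = A" by (simp add: A_def)
  have rB: "m2 div (p * e) = B" by (simp add: B_def)
  have "p ^ k dvd e * (p * (A + B))" using dv eA eB by (simp add: algebra_simps)
  hence dAB: "p ^ k dvd p * (A + B)" using coprime_pow_dvd[OF p pe] by blast
  have c: "[int (PP t (p * A) (p * B)) = int (PP t A B)] (mod int p ^ k)"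
    unfolding PP_def using L2[OF p t A1 B1 dAB] .
  have st: "int p ^ k dvd (-1) ^ ((p * A + p * B) * t) * int (PP t (p * A) (p * B)) - (-1) ^ ((A + B) * t) * int (PP t A B)"
    by (rule sign_step[OF p dAB c])
  have mu: "moebius (p * e) = - moebius e" by (rule moebius_p_coprime[OF p e0 pe])
  have "term_d m1 m2 t e + term_d m1 m2 t (p * e)
      = moebius e * ((-1) ^ ((p * A + p * B) * t) * int (PP t (p * A) (p * B)) - (-1) ^ ((A + B) * t) * int (PP t A B))"
    unfolding term_d_def qA qB rA rB mu by (simp add: algebra_simps)
  thus ?thesis using st by (simp add: dvd_mult)
qed

lemma key:
  fixes p k m1 m2 t :: nat
  assumes p: "prime p" and m1: "m1 \<ge> 1" and m2: "m2 \<ge> 1" and t: "t \<ge> 1"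
    and dv: "p ^ k dvd m1 + m2"
  shows "int p ^ k dvd (\<Sum>d\<in>{d. d dvd m1 \<and> d dvd m2}. term_d m1 m2 t d)"
proof -
  define Ds where "Ds = {d. d dvd m1 \<and> d dvd m2}"
  have fin: "finite Ds" unfolding Ds_def
    by (rule finite_subset[of _ "{d. d dvd m1}"]) (use m1 in auto)
  show ?thesis
  proof (cases "p dvd m1 \<and> p dvd m2")
    case False
    thus ?thesis using key_A[OF p m1 m2 t dv False] by (intro dvd_sum) auto
  next
    case True
    have p0: "p > 0" using prime_gt_0_nat[OF p] .
    define D0 where "D0 = {d\<in>Ds. \<not> p dvd d}"
    define E where "E = {e. p * e \<in> Ds}"
    have split1: "sum (term_d m1 m2 t) Ds = sum (term_d m1 m2 t) D0 + sum (term_d m1 m2 t) (Ds - D0)"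
    proof -
      have "Ds = D0 \<union> (Ds - D0)" "D0 \<inter> (Ds - D0) = {}" unfolding D0_def by auto
      moreover have "finite D0" "finite (Ds - D0)" using fin unfolding D0_def by auto
      ultimately show ?thesis by (metis sum.union_disjoint)
    qed
    have img: "Ds - D0 = (\<lambda>e. p * e) ` E"
    proof (rule set_eqI, rule iffI)
      fix d assume d: "d \<in> Ds - D0"
      then obtain e where "d = p * e" unfolding D0_def by auto
      thus "d \<in> (\<lambda>e. p * e) ` E" using d unfolding E_def by auto
    qed (auto simp: E_def D0_def)
    have inj: "inj_on (\<lambda>e. p * e) E" using p0 by (auto simp: inj_on_def)
    have finE: "finite E" using finite_imageD[of "(\<lambda>e. p * e)" E] inj img fin
      by (metis finite_Diff)
    have s2: "sum (term_d m1 m2 t) (Ds - D0) = (\<Sum>e\<in>E. term_d m1 m2 t (p * e))"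
      unfolding img by (simp add: sum.reindex[OF inj] o_def)
    also have "\<dots> = (\<Sum>e\<in>D0. term_d m1 m2 t (p * e))"
    proof (rule sum.mono_neutral_right[OF finE])
      show "D0 \<subseteq> E"
      proof
        fix e assume e: "e \<in> D0"
        hence "e dvd m1" "e dvd m2" "\<not> p dvd e" unfolding D0_def Ds_def by auto
        moreover have "coprime p e" using \<open>\<not> p dvd e\<close> p by (simp add: prime_imp_coprime)
        ultimately have "p * e dvd m1" "p * e dvd m2" using True by (auto intro: divides_mult)
        thus "e \<in> E" unfolding E_def Ds_def by simp
      qed
      show "\<forall>e\<in>E - D0. term_d m1 m2 t (p * e) = 0"
      proof
        fix e assume e: "e \<in> E - D0"
        have "e \<in> Ds" using e unfolding E_def Ds_def by (auto intro: dvd_mult_left)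
        hence "p dvd e" using e unfolding D0_def by auto
        thus "term_d m1 m2 t (p * e) = 0" unfolding term_d_def using moebius_p_dvd[OF p] by simp
      qed
    qed
    finally have "sum (term_d m1 m2 t) Ds = (\<Sum>e\<in>D0. term_d m1 m2 t e + term_d m1 m2 t (p * e))"
      using split1 by (simp add: sum.distrib)
    moreover have "int p ^ k dvd (\<Sum>e\<in>D0. term_d m1 m2 t e + term_d m1 m2 t (p * e))"
    proof (rule dvd_sum)
      fix e assume e: "e \<in> D0"
      hence "e dvd m1" "e dvd m2" "\<not> p dvd e" unfolding D0_def Ds_def by auto
      moreover have "coprime p e" using \<open>\<not> p dvd e\<close> p by (simp add: prime_imp_coprime)
      ultimately have "p * e dvd m1" "p * e dvd m2" using True by (auto intro: divides_mult)
      thus "int p ^ k dvd term_d m1 m2 t e + term_d m1 m2 t (p * e)"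
        using key_B[OF p m1 m2 t dv \<open>\<not> p dvd e\<close>] by blast
    qed
    ultimately show ?thesis unfolding Ds_def by simp
  qed
qed

lemma core:
  fixes m1 m2 t :: nat
  assumes m1: "m1 \<ge> 1" and m2: "m2 \<ge> 1" and t: "t \<ge> 1"
  shows "int (m1 + m2) dvd (\<Sum>d\<in>{d. d dvd m1 \<and> d dvd m2}. term_d m1 m2 t d)"
proof (cases "(\<Sum>d\<in>{d. d dvd m1 \<and> d dvd m2}. term_d m1 m2 t d) = 0")
  case True thus ?thesis by simp
next
  case False
  show ?thesis
  proof (rule multiplicity_le_imp_dvd)
    show "int (m1 + m2) \<noteq> 0" using m1 by simp
    fix q :: int assume q: "prime q"
    define p where "p = nat q"
    have qp: "q = int p" using q unfolding p_def by (simp add: prime_ge_0_int)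
    have pp: "prime p" using q qp by simp
    define k where "k = multiplicity q (int (m1 + m2))"
    have "q ^ k dvd int (m1 + m2)" unfolding k_def by (rule multiplicity_dvd)
    hence "int (p ^ k) dvd int (m1 + m2)" using qp by simp
    hence "p ^ k dvd m1 + m2" by (simp only: of_nat_dvd_iff)
    hence "int p ^ k dvd (\<Sum>d\<in>{d. d dvd m1 \<and> d dvd m2}. term_d m1 m2 t d)"
      by (rule key[OF pp m1 m2 t])
    hence "q ^ k dvd (\<Sum>d\<in>{d. d dvd m1 \<and> d dvd m2}. term_d m1 m2 t d)" using qp by simp
    thus "multiplicity q (int (m1 + m2)) \<le> multiplicity q (\<Sum>d\<in>{d. d dvd m1 \<and> d dvd m2}. term_d m1 m2 t d)"
      unfolding k_def using False q by (intro multiplicity_geI) (auto simp: prime_elem_def)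
  qed
qed



lemma nop_nat: "neg_one_pow (int n) = (-1) ^ n"
  unfolding neg_one_pow_def by (simp add: minus_one_power_iff)

lemma nop_neg: "neg_one_pow (- x) = neg_one_pow x"
  unfolding neg_one_pow_def by simp

lemma bi_nat: "binom_int (int n) b = int (n choose b)"
  unfolding binom_int_def by simp

lemma bi_neg: "a < 0 \<Longrightarrow> b \<ge> 1 \<Longrightarrow> binom_int a b = (-1) ^ b * int (nat (- a + int b - 1) choose b)"
  unfolding binom_int_def by simp

lemma term_pos:
  fixes m1 m2 d :: nat and \<tau> :: int
  assumes m1: "m1 \<ge> 1" and m2: "m2 \<ge> 1" and d1: "d dvd m1" and d2: "d dvd m2" and tau: "\<tau> \<ge> 0"
  shows "moebius d * neg_one_pow ((int m1 + int m2) * (\<tau> + 1) div int d)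
          * binom_int ((int m1 * \<tau> + int m1) div int d - 1) (m1 div d)
          * binom_int ((int m2 * \<tau> + int m2) div int d) (m2 div d)
       = term_d m1 m2 (nat (\<tau> + 1)) d"
proof -
  define t where "t = nat (\<tau> + 1)"
  have tt: "int t = \<tau> + 1" using tau by (simp add: t_def)
  have t1: "t \<ge> 1" using tau by (simp add: t_def)
  define A where "A = m1 div d"
  define B where "B = m2 div d"
  have eA: "m1 = d * A" using d1 by (simp add: A_def)
  have eB: "m2 = d * B" using d2 by (simp add: B_def)
  have d0: "d > 0" using eA m1 by (cases d) auto
  have A1: "A \<ge> 1" using eA m1 by (cases A) auto
  have x1: "(int m1 * \<tau> + int m1) div int d = int (A * t)"
  proof -
    have "int m1 * \<tau> + int m1 = int d * int (A * t)" using eA tt by (simp add: algebra_simps)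
    thus ?thesis using d0 by simp
  qed
  have x2: "(int m2 * \<tau> + int m2) div int d = int (B * t)"
  proof -
    have "int m2 * \<tau> + int m2 = int d * int (B * t)" using eB tt by (simp add: algebra_simps)
    thus ?thesis using d0 by simp
  qed
  have x3: "(int m1 + int m2) * (\<tau> + 1) div int d = int ((A + B) * t)"
  proof -
    have "(int m1 + int m2) * (\<tau> + 1) = int d * int ((A + B) * t)" using eA eB tt by (simp add: algebra_simps)
    thus ?thesis using d0 by simp
  qed
  have At: "A * t \<ge> 1" using A1 t1 by simp
  have x4: "int (A * t) - 1 = int (A * t - 1)" using At by simp
  show ?thesis
    unfolding x1 x2 x3 x4 nop_nat bi_nat term_d_def PP_def t_def[symmetric] A_def[symmetric] B_def[symmetric]
    by simp
qed

lemma term_neg: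
  fixes m1 m2 d :: nat and \<tau> :: int
  assumes m1: "m1 \<ge> 1" and m2: "m2 \<ge> 1" and d1: "d dvd m1" and d2: "d dvd m2" and tau: "\<tau> < 0"
  shows "moebius d * neg_one_pow ((int m1 + int m2) * (\<tau> + 1) div int d)
          * binom_int ((int m1 * \<tau> + int m1) div int d - 1) (m1 div d)
          * binom_int ((int m2 * \<tau> + int m2) div int d) (m2 div d)
       = term_d m2 m1 (nat (- \<tau>)) d"
proof -
  define u where "u = nat (- \<tau> - 1)"
  have uu: "\<tau> + 1 = - int u" using tau by (simp add: u_def)
  have tu: "nat (- \<tau>) = u + 1" using tau by (simp add: u_def)
  define A where "A = m1 div d"
  define B where "B = m2 div d"
  have eA: "m1 = d * A" using d1 by (simp add: A_def)
  have eB: "m2 = d * B" using d2 by (simp add: B_def)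
  have d0: "d > 0" using eA m1 by (cases d) auto
  have A1: "A \<ge> 1" using eA m1 by (cases A) auto
  have B1: "B \<ge> 1" using eB m2 by (cases B) auto
  have x1: "(int m1 * \<tau> + int m1) div int d = - int (A * u)"
  proof -
    have "int m1 * \<tau> + int m1 = int m1 * (\<tau> + 1)" by (simp add: algebra_simps)
    also have "\<dots> = int d * (- int (A * u))" unfolding uu using eA by simp
    finally have eq: "int m1 * \<tau> + int m1 = int d * (- int (A * u))" .
    show ?thesis unfolding eq by (rule nonzero_mult_div_cancel_left) (use d0 in simp)
  qed
  have x2: "(int m2 * \<tau> + int m2) div int d = - int (B * u)"
  proof -
    have "int m2 * \<tau> + int m2 = int m2 * (\<tau> + 1)" by (simp add: algebra_simps)
    also have "\<dots> = int d * (- int (B * u))" unfolding uu using eB by simp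
    finally have eq: "int m2 * \<tau> + int m2 = int d * (- int (B * u))" .
    show ?thesis unfolding eq by (rule nonzero_mult_div_cancel_left) (use d0 in simp)
  qed
  have x3: "(int m1 + int m2) * (\<tau> + 1) div int d = - int ((A + B) * u)"
  proof -
    have "(int m1 + int m2) * (\<tau> + 1) = int d * (- int ((A + B) * u))" unfolding uu using eA eB
      by (simp add: algebra_simps)
    thus ?thesis using d0 by (simp only:) (rule nonzero_mult_div_cancel_left, simp)
  qed
  have b1: "binom_int (- int (A * u) - 1) A = (-1) ^ A * int (A * (u + 1) choose A)"
  proof -
    have "- (- int (A * u) - 1) + int A - 1 = int (A * (u + 1))" by (simp add: algebra_simps)
    hence e: "nat (- (- int (A * u) - 1) + int A - 1) = A * (u + 1)" by (simp only: nat_int)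
    have neg: "- int (A * u) - 1 < 0" using of_nat_0_le_iff[of "A * u"] by linarith
    have "binom_int (- int (A * u) - 1) A = (-1) ^ A * int (nat (- (- int (A * u) - 1) + int A - 1) choose A)"
      by (rule bi_neg[OF neg A1])
    thus ?thesis unfolding e .
  qed
  have b2: "binom_int (- int (B * u)) B = (-1) ^ B * int (B * (u + 1) - 1 choose B)"
  proof (cases "u = 0")
    case True
    thus ?thesis using B1 bi_nat[of 0 B] by (simp add: binomial_eq_0)
  next
    case False
    hence neg: "- int (B * u) < 0" using B1 by simp
    have "- (- int (B * u)) + int B - 1 = int (B * (u + 1) - 1)" using B1 False
      by (simp add: algebra_simps of_nat_diff)
    hence e: "nat (- (- int (B * u)) + int B - 1) = B * (u + 1) - 1" by (simp only: nat_int)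
    have "binom_int (- int (B * u)) B = (-1) ^ B * int (nat (- (- int (B * u)) + int B - 1) choose B)"
      by (rule bi_neg[OF neg B1])
    thus ?thesis unfolding e .
  qed
  have sg: "(-1::int) ^ ((A + B) * u) * (-1) ^ A * (-1) ^ B = (-1) ^ ((B + A) * (u + 1))"
    by (simp add: algebra_simps power_add)
  show ?thesis
    unfolding x1 x2 x3 nop_neg nop_nat b1 b2 term_d_def PP_def tu A_def[symmetric] B_def[symmetric]
    unfolding sg[symmetric] of_nat_mult by (simp only: ac_simps)
qed


theorem theorem1p3:
  fixes \<tau> :: int and m1 m2 :: nat
  assumes "m1 \<ge> 1" and "m2 \<ge> 1"
  shows "n_DT m1 m2 \<tau> \<in> \<int>"
proof -
  define Ds where "Ds = {d. d dvd m1 \<and> d dvd m2}"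
  define f where "f d = moebius d
          * neg_one_pow ((int m1 + int m2) * (\<tau> + 1) div int d)
          * binom_int ((int m1 * \<tau> + int m1) div int d - 1) (m1 div d)
          * binom_int ((int m2 * \<tau> + int m2) div int d) (m2 div d)" for d
  have nd: "n_DT m1 m2 \<tau> = (1 / real (m1 + m2)) * real_of_int (sum f Ds)"
    unfolding n_DT_def f_def Ds_def by (simp only: of_int_sum)
  have dv: "int (m1 + m2) dvd sum f Ds"
  proof (cases "\<tau> \<ge> 0")
    case True
    have "sum f Ds = (\<Sum>d\<in>{d. d dvd m1 \<and> d dvd m2}. term_d m1 m2 (nat (\<tau> + 1)) d)"
      unfolding Ds_def f_def using term_pos[OF assms _ _ True] by (intro sum.cong) auto
    moreover have "nat (\<tau> + 1) \<ge> 1" using True by simp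
    ultimately show ?thesis using core[OF assms] by simp
  next
    case False
    hence neg: "\<tau> < 0" by simp
    have "sum f Ds = (\<Sum>d\<in>{d. d dvd m2 \<and> d dvd m1}. term_d m2 m1 (nat (- \<tau>)) d)"
    proof -
      have "Ds = {d. d dvd m2 \<and> d dvd m1}" unfolding Ds_def by auto
      thus ?thesis unfolding f_def using term_neg[OF assms _ _ neg] by (intro sum.cong) auto
    qed
    moreover have "nat (- \<tau>) \<ge> 1" using neg by simp
    moreover have "int (m1 + m2) = int (m2 + m1)" by simp
    ultimately show ?thesis using core[OF assms(2) assms(1)] by metis
  qed
  then obtain c where c: "sum f Ds = int (m1 + m2) * c" by (elim dvdE)
  have "n_DT m1 m2 \<tau> = real_of_int c"
    unfolding nd c using assms by simp
  thus ?thesis by simp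
qed

end
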